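(* Let $R$ be a commutative ring with $2\in R^\times$. Define $\eta:GL(R)\to W'_E(R)$ by sending $G\in GL_{2n}(R)$ to the class of $G^t\psi_{2n}G$ and $G\in GL_{2n+1}(R)$ to the class of $(G\perp 1)^t\psi_{2n+2}(G\perp1)$. Then $\eta$ is well defined and induces a group homomorphism $\eta:K_1(R)\to W'_E(R)$.
   Context: $M\perp N$ denotes the block diagonal matrix $\begin{pmatrix}M&0\\0&N\end{pmatrix}$; $GL(R)=\bigcup_n GL_n(R)$ via $G\mapsto G\perp 1$, and $K_1(R)=GL(R)/E(R)$ with $E(R)$ the elementary subgroup. Let $\psi_2=\begin{pmatrix}0&1\\-1&0\end{pmatrix}$ and $\psi_{2r}=\psi_2\perp\psi_{2r-2}$. Let $S'_{2n}(R)$ be the set of invertible alternating $2n\times 2n$ matrices over $R$; for $m<n$, $S'_{2m}(R)\subset S'_{2n}(R)$ via $G\mapsto G\perp\psi_{2n-2m}$, and $S'(R)=\bigcup_n S'_{2n}(R)$. For $G\in S'_{2n}(R)$, $G'\in S'_{2m}(R)$, $G\sim G'$ iff there are $t\in\mathbb N$ and $E\in E_{2(m+n+t)}(R)$ with $G\perp\psi_{2(m+t)}=E^t(G'\perp\psi_{2(n+t)})E$. $W'_E(R):=S'(R)/\sim$ is an abelian group under $\perp$ with neutral element the class of $\psi_2$. *)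

theory Defs
  imports "Jordan_Normal_Form.Matrix"
begin

definition bdiag :: "'a::zero mat \<Rightarrow> 'a mat \<Rightarrow> 'a mat" where
  "bdiag M N = four_block_mat M (0\<^sub>m (dim_row M) (dim_col N)) (0\<^sub>m (dim_row N) (dim_col M)) N"

definition GL :: "nat \<Rightarrow> 'a::comm_ring_1 mat set" where
  "GL n = {G. G \<in> carrier_mat n n \<and> invertible_mat G}"

definition elem_mat :: "nat \<Rightarrow> nat \<Rightarrow> nat \<Rightarrow> 'a::comm_ring_1 \<Rightarrow> 'a mat" where
  "elem_mat n i j a = mat n n (\<lambda>(k,l). (if k = l then 1 else 0) + (if k = i \<and> l = j then a else 0))"

text \<open>Elementary subgroup E_n(R): generated (as a monoid, hence as a group since
  elementary matrices have elementary inverses) by the elementary matrices.\<close>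
inductive_set Elem :: "nat \<Rightarrow> 'a::comm_ring_1 mat set" for n where
  Elem_one: "1\<^sub>m n \<in> Elem n"
| Elem_step: "E \<in> Elem n \<Longrightarrow> i < n \<Longrightarrow> j < n \<Longrightarrow> i \<noteq> j \<Longrightarrow> E * elem_mat n i j a \<in> Elem n"

definition stab :: "'a::comm_ring_1 mat \<Rightarrow> nat \<Rightarrow> 'a mat" where
  "stab G k = bdiag G (1\<^sub>m (k - dim_row G))"

definition K1_equiv :: "'a::comm_ring_1 mat \<Rightarrow> 'a mat \<Rightarrow> bool" where
  "K1_equiv G H = (\<exists>k E. dim_row G \<le> k \<and> dim_row H \<le> k \<and> E \<in> Elem k \<and>
      stab G k = stab H k * E)"

definition psi2 :: "'a::comm_ring_1 mat" where
  "psi2 = mat 2 2 (\<lambda>(i,j). if i = 0 \<and> j = 1 then 1 else if i = 1 \<and> j = 0 then -1 else 0)"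

text \<open>psi r is the matrix psi_{2r}.\<close>
fun psi :: "nat \<Rightarrow> 'a::comm_ring_1 mat" where
  "psi 0 = 0\<^sub>m 0 0"
| "psi (Suc r) = bdiag psi2 (psi r)"

definition alternating :: "'a::comm_ring_1 mat \<Rightarrow> bool" where
  "alternating A = (square_mat A \<and> transpose_mat A = - A \<and> (\<forall>i < dim_row A. A $$ (i,i) = 0))"

definition Sp' :: "nat \<Rightarrow> 'a::comm_ring_1 mat set" where
  "Sp' n = {G. G \<in> carrier_mat (2*n) (2*n) \<and> alternating G \<and> invertible_mat G}"

definition S' :: "'a::comm_ring_1 mat set" where
  "S' = (\<Union>n. Sp' n)"

definition W_equiv :: "'a::comm_ring_1 mat \<Rightarrow> 'a mat \<Rightarrow> bool" where
  "W_equiv G G' = (\<exists>n m. G \<in> Sp' n \<and> G' \<in> Sp' m \<and>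
     (\<exists>t E. E \<in> Elem (2*(m+n+t)) \<and>
        bdiag G (psi (m+t)) = transpose_mat E * bdiag G' (psi (n+t)) * E))"

definition eta :: "'a::comm_ring_1 mat \<Rightarrow> 'a mat" where
  "eta G = (if even (dim_row G) then transpose_mat G * psi (dim_row G div 2) * G
            else transpose_mat (bdiag G (1\<^sub>m 1)) * psi (dim_row G div 2 + 1) * bdiag G (1\<^sub>m 1))"

end

theory Submission
  imports Defs
begin


lemma bdiag_carrier[simp]: "A \<in> carrier_mat a a \<Longrightarrow> B \<in> carrier_mat b b \<Longrightarrow> bdiag A B \<in> carrier_mat (a+b) (a+b)"
  unfolding bdiag_def by auto

lemma bdiag_dims[simp]: "dim_row (bdiag A B) = dim_row A + dim_row B" "dim_col (bdiag A B) = dim_col A + dim_col B"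
  unfolding bdiag_def by auto

lemma bdiag_index: "A \<in> carrier_mat a a \<Longrightarrow> B \<in> carrier_mat b b \<Longrightarrow> i < a+b \<Longrightarrow> j < a+b \<Longrightarrow>
  bdiag A B $$ (i,j) = (if i < a \<and> j < a then A $$ (i,j) else if a \<le> i \<and> a \<le> j then B $$ (i-a,j-a) else 0)"
  unfolding bdiag_def by auto

lemma bdiag_mult: assumes "A1 \<in> carrier_mat a a" "A2 \<in> carrier_mat a a" "B1 \<in> carrier_mat b b" "B2 \<in> carrier_mat b b"
  shows "bdiag A1 B1 * bdiag A2 B2 = bdiag (A1*A2) (B1*B2)"
  unfolding bdiag_def using assms
  by (subst mult_four_block_mat[of A1 a a _ b _ b B1 A2 a _ b]) auto

lemma bdiag_transpose: assumes "A \<in> carrier_mat a a" "B \<in> carrier_mat b b"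
  shows "transpose_mat (bdiag A B) = bdiag (transpose_mat A) (transpose_mat B)"
  unfolding bdiag_def using assms
  by (subst transpose_four_block_mat[of A a a _ b _ b B]) auto

lemma bdiag_assoc: assumes "A \<in> carrier_mat a a" "B \<in> carrier_mat b b" "C \<in> carrier_mat c c"
  shows "bdiag (bdiag A B) C = bdiag A (bdiag B C)"
  by (rule eq_matI) (use assms in \<open>auto simp: bdiag_def\<close>)

lemma bdiag_one: "bdiag (1\<^sub>m a) (1\<^sub>m b) = 1\<^sub>m (a+b)"
  unfolding bdiag_def by simp

lemma bdiag_one0: "A \<in> carrier_mat a a \<Longrightarrow> bdiag A (1\<^sub>m 0) = A"
  by (rule eq_matI) (auto simp: bdiag_def)

lemma bdiag_zero0: "B \<in> carrier_mat b b \<Longrightarrow> bdiag (0\<^sub>m 0 0) B = B"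
  by (rule eq_matI) (auto simp: bdiag_def)

lemma bdiag_uminus: fixes A :: "'a::ring mat" assumes "A \<in> carrier_mat a a" "B \<in> carrier_mat b b"
  shows "bdiag (-A) (-B) = - bdiag A B"
  by (rule eq_matI) (use assms in \<open>auto simp: bdiag_def\<close>)

lemma psi2_carrier[simp]: "psi2 \<in> carrier_mat 2 2" unfolding psi2_def by auto

lemma psi_carrier[simp]: "psi r \<in> carrier_mat (2*r) (2*r)"
  by (induction r) (auto, metis bdiag_carrier psi2_carrier add_2_eq_Suc)

lemma psi_add: "psi (a+b) = bdiag (psi a) (psi b)"
  by (induction a) (simp_all add: bdiag_zero0[OF psi_carrier] bdiag_assoc[OF psi2_carrier psi_carrier psi_carrier])



lemma Elem_carrier: "E \<in> Elem n \<Longrightarrow> E \<in> carrier_mat n n"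
  by (induction rule: Elem.induct) (auto simp: elem_mat_def)

lemma elem_mat_carrier[simp]: "elem_mat n i j a \<in> carrier_mat n n"
  by (auto simp: elem_mat_def)

lemma Elem_mult: assumes "F \<in> Elem n" "E \<in> Elem n" shows "E * F \<in> Elem n"
  using assms(1)
proof (induction rule: Elem.induct)
  case Elem_one
  then show ?case using assms(2) Elem_carrier by (metis right_mult_one_mat)
next
  case (Elem_step F i j a)
  have "E * (F * elem_mat n i j a) = (E * F) * elem_mat n i j a"
    using Elem_carrier[OF assms(2)] Elem_carrier[OF Elem_step.hyps(1)]
    by (metis assoc_mult_mat elem_mat_carrier)
  then show ?case using Elem_step Elem.Elem_step by metis
qed

lemma mult_elem_index:
  fixes M :: "'a::comm_ring_1 mat"
  assumes M: "M \<in> carrier_mat N N" and ij: "i < N" "j < N" and kl: "k < N" "l < N"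
  shows "(M * elem_mat N i j a) $$ (k,l) = M $$ (k,l) + (if l = j then a * M $$ (k,i) else 0)"
proof -
  have "(M * elem_mat N i j a) $$ (k,l) = (\<Sum>p<N. M $$ (k,p) * ((if p = l then 1 else 0) + (if p = i \<and> l = j then a else 0)))"
    using assms by (auto simp: scalar_prod_def elem_mat_def lessThan_atLeast0 intro!: sum.cong)
  also have "\<dots> = (\<Sum>p<N. (if p = l then M $$ (k,p) else 0)) + (\<Sum>p<N. (if p = i then (if l = j then a * M $$ (k,p) else 0) else 0))"
    by (subst sum.distrib[symmetric]) (auto intro!: sum.cong simp: algebra_simps)
  also have "\<dots> = M $$ (k,l) + (if l = j then a * M $$ (k,i) else 0)"
    using assms by (simp add: sum.delta')
  finally show ?thesis .
qed



lemma idx_decode: assumes "l < (N::nat)" shows "(r*N + l = k) \<longleftrightarrow> (r = k div N \<and> l = k mod N \<and> k div N * N + k mod N = k)"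
  using assms by (metis add.commute div_mult_self1 div_less less_nat_zero_code mod_mult_self1 mod_less mod_div_mult_eq add_0 mult.commute)

lemma unip_Elem:
  fixes F :: "nat \<times> nat \<Rightarrow> 'a::comm_ring_1"
  assumes supp: "\<And>p q. p < N \<Longrightarrow> q < N \<Longrightarrow> F (p,q) \<noteq> 0 \<Longrightarrow> p \<in> P \<and> q \<in> Q" and disj: "P \<inter> Q = {}"
  shows "1\<^sub>m N + mat N N F \<in> Elem N"
proof -
  define Fk where "Fk k = (\<lambda>(p,q). if p*N+q < k then F (p,q) else (0::'a))" for k
  have "1\<^sub>m N + mat N N (Fk k) \<in> Elem N" for k
  proof (induction k)
    case 0
    have "1\<^sub>m N + mat N N (Fk 0) = 1\<^sub>m N" by (rule eq_matI) (auto simp: Fk_def)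
    then show ?case using Elem_one by metis
  next
    case (Suc k)
    define p where "p = k div N"
    define q where "q = k mod N"
    have dec: "r*N + l = k \<longleftrightarrow> (r = p \<and> l = q)" if "l < N" for r l
      using idx_decode[OF that, of r k] unfolding p_def q_def by auto
    show ?case
    proof (cases "p < N \<and> q < N \<and> F (p,q) \<noteq> 0")
      case False
      have "mat N N (Fk (Suc k)) = mat N N (Fk k)"
      proof (rule eq_matI)
        fix r l assume rl: "r < dim_row (mat N N (Fk k))" "l < dim_col (mat N N (Fk k))"
        then have rl': "r < N" "l < N" by auto
        show "mat N N (Fk (Suc k)) $$ (r, l) = mat N N (Fk k) $$ (r, l)"
        proof (cases "r*N+l = k")
          case True
          then have "r = p" "l = q" using dec rl' by auto
          then show ?thesis using False rl' True by (auto simp: Fk_def)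
        next
          case False
          then show ?thesis using rl' by (auto simp: Fk_def)
        qed
      qed auto
      then show ?thesis using Suc by simp
    next
      case True
      then have pq: "p < N" "q < N" "p \<in> P" "q \<in> Q" using supp by auto
      then have pnq: "p \<noteq> q" using disj by auto
      let ?M = "1\<^sub>m N + mat N N (Fk k)"
      have M: "?M \<in> carrier_mat N N" by auto
      have "?M * elem_mat N p q (F (p,q)) = 1\<^sub>m N + mat N N (Fk (Suc k))"
      proof (rule eq_matI)
        fix r l assume rl: "r < dim_row (1\<^sub>m N + mat N N (Fk (Suc k)))" "l < dim_col (1\<^sub>m N + mat N N (Fk (Suc k)))"
        then have rl': "r < N" "l < N" by auto
        have Mrp: "?M $$ (r,p) = (if r = p then 1 else 0)"
        proof -
          have "F (r,p) = 0" if "F (r,p) \<noteq> 0" using supp[OF rl'(1) pq(1) that] pq disj by auto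
          then show ?thesis using rl' pq by (auto simp: Fk_def)
        qed
        have "(?M * elem_mat N p q (F (p,q))) $$ (r,l) = ?M $$ (r,l) + (if l = q then F (p,q) * ?M $$ (r,p) else 0)"
          by (rule mult_elem_index[OF M pq(1,2) rl'])
        also have "\<dots> = (1\<^sub>m N + mat N N (Fk (Suc k))) $$ (r,l)"
          using rl' dec[OF rl'(2), of r] Mrp by (auto simp: Fk_def)
        finally show "(?M * elem_mat N p q (F (p,q))) $$ (r,l) = (1\<^sub>m N + mat N N (Fk (Suc k))) $$ (r,l)" .
      qed (auto simp: elem_mat_def)
      then show ?thesis using Elem_step[OF Suc pq(1,2) pnq] by metis
    qed
  qed
  moreover have "mat N N (Fk (N*N)) = mat N N F"
  proof (rule eq_matI)
    fix r l assume "r < dim_row (mat N N F)" "l < dim_col (mat N N F)"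
    then have rl: "r < N" "l < N" by auto
    have "r*N + l < N*N"
    proof -
      have "r*N + l < r*N + N" using rl by simp
      also have "\<dots> = (Suc r)*N" by simp
      also have "\<dots> \<le> N*N" using rl by (intro mult_le_mono1) simp
      finally show ?thesis .
    qed
    then show "mat N N (Fk (N*N)) $$ (r,l) = mat N N F $$ (r,l)" using rl by (auto simp: Fk_def)
  qed auto
  ultimately show ?thesis by metis
qed



definition U :: "nat \<Rightarrow> 'a::comm_ring_1 mat \<Rightarrow> 'a mat" where
  "U n X = four_block_mat (1\<^sub>m n) X (0\<^sub>m n n) (1\<^sub>m n)"
definition L :: "nat \<Rightarrow> 'a::comm_ring_1 mat \<Rightarrow> 'a mat" where
  "L n X = four_block_mat (1\<^sub>m n) (0\<^sub>m n n) X (1\<^sub>m n)"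

lemma U_Elem: assumes X: "X \<in> carrier_mat n n" shows "U n X \<in> Elem (n+n)"
proof -
  have "U n X = 1\<^sub>m (n+n) + mat (n+n) (n+n) (\<lambda>(k,l). if k < n \<and> n \<le> l then X $$ (k,l-n) else 0)"
    by (rule eq_matI) (use X in \<open>auto simp: U_def\<close>)
  moreover have "1\<^sub>m (n+n) + mat (n+n) (n+n) (\<lambda>(k,l). if k < n \<and> n \<le> l then X $$ (k,l-n) else 0) \<in> Elem (n+n)"
    by (rule unip_Elem[where P="{..<n}" and Q="{n..}"]) (auto split: if_splits)
  ultimately show ?thesis by simp
qed

lemma L_Elem: assumes X: "X \<in> carrier_mat n n" shows "L n X \<in> Elem (n+n)"
proof -
  have "L n X = 1\<^sub>m (n+n) + mat (n+n) (n+n) (\<lambda>(k,l). if n \<le> k \<and> l < n then X $$ (k-n,l) else 0)"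
    by (rule eq_matI) (use X in \<open>auto simp: L_def\<close>)
  moreover have "1\<^sub>m (n+n) + mat (n+n) (n+n) (\<lambda>(k,l). if n \<le> k \<and> l < n then X $$ (k-n,l) else 0) \<in> Elem (n+n)"
    by (rule unip_Elem[where P="{n..}" and Q="{..<n}"]) (auto split: if_splits)
  ultimately show ?thesis by simp
qed

lemma fb_mult: assumes "A1 \<in> carrier_mat n n" "B1 \<in> carrier_mat n n" "C1 \<in> carrier_mat n n" "D1 \<in> carrier_mat n n"
  "A2 \<in> carrier_mat n n" "B2 \<in> carrier_mat n n" "C2 \<in> carrier_mat n n" "D2 \<in> carrier_mat n n"
  shows "four_block_mat A1 B1 C1 D1 * four_block_mat A2 B2 C2 D2
  = four_block_mat (A1 * A2 + B1 * C2) (A1 * B2 + B1 * D2) (C1 * A2 + D1 * C2) (C1 * B2 + D1 * D2)"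
  by (rule mult_four_block_mat[OF assms])

lemma uminus_r_inv_mat_aux: "(A::'a::ring mat) \<in> carrier_mat n m \<Longrightarrow> A + - A = 0\<^sub>m n m" "(A::'a::ring mat) \<in> carrier_mat n m \<Longrightarrow> - A + A = 0\<^sub>m n m"
  by (rule eq_matI, auto)+

lemma whitehead:
  fixes H :: "'a::comm_ring_1 mat"
  assumes H: "H \<in> carrier_mat n n" and Hi: "Hi \<in> carrier_mat n n" and inv1: "H * Hi = 1\<^sub>m n" and inv2: "Hi * H = 1\<^sub>m n"
  shows "bdiag H Hi \<in> Elem (n+n)"
proof -
  have one: "1\<^sub>m n \<in> carrier_mat n n" "0\<^sub>m n n \<in> carrier_mat n n" "- 1\<^sub>m n \<in> carrier_mat n n" "- Hi \<in> carrier_mat n n" using Hi by auto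
  have S: "U n (- 1\<^sub>m n) * L n (1\<^sub>m n) * U n (- 1\<^sub>m n) = four_block_mat (0\<^sub>m n n) (- 1\<^sub>m n) (1\<^sub>m n) (0\<^sub>m n n)"
    unfolding U_def L_def using one
    apply (subst fb_mult[of _ n], auto)
    apply (subst fb_mult[of _ n], auto)
    done
  have "U n H * L n (- Hi) * U n H * (U n (- 1\<^sub>m n) * L n (1\<^sub>m n) * U n (- 1\<^sub>m n)) = bdiag H Hi"
    unfolding S
    unfolding U_def L_def bdiag_def using one H Hi
    apply (subst fb_mult[of _ n], auto)
    apply (subst fb_mult[of _ n], auto)
    apply (subst fb_mult[of _ n], auto)
    apply (simp add: inv1 inv2 uminus_r_inv_mat_aux[OF one_carrier_mat] H Hi)
    apply (rule cong_four_block_mat, use H in auto)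
    done
  moreover have "U n H * L n (- Hi) * U n H * (U n (- 1\<^sub>m n) * L n (1\<^sub>m n) * U n (- 1\<^sub>m n)) \<in> Elem (n+n)"
    using U_Elem L_Elem Elem_mult one H by metis
  ultimately show ?thesis by simp
qed



lemma bdiag_elem: assumes "i < k" "j < k" shows "bdiag (elem_mat k i j a) (1\<^sub>m m) = elem_mat (k+m) i j (a::'a::comm_ring_1)"
  by (rule eq_matI) (use assms in \<open>auto simp: bdiag_def elem_mat_def\<close>)

lemma Elem_pad: assumes "E \<in> Elem k" shows "bdiag E (1\<^sub>m m) \<in> Elem (k+m)"
  using assms
proof (induction rule: Elem.induct)
  case Elem_one
  then show ?case by (simp add: bdiag_one Elem.Elem_one)
next
  case (Elem_step E i j a)
  have "bdiag (E * elem_mat k i j a) (1\<^sub>m m) = bdiag E (1\<^sub>m m) * bdiag (elem_mat k i j a) (1\<^sub>m m)"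
    using bdiag_mult[of E k "elem_mat k i j a" "1\<^sub>m m" m "1\<^sub>m m"] Elem_carrier[OF Elem_step.hyps(1)] by simp
  also have "\<dots> = bdiag E (1\<^sub>m m) * elem_mat (k+m) i j a" by (subst bdiag_elem[OF Elem_step.hyps(2,3)]) (rule refl)
  finally show ?case using Elem.Elem_step[OF Elem_step.IH, of i j a] Elem_step by simp
qed

definition invp :: "nat \<Rightarrow> 'a::comm_ring_1 mat \<Rightarrow> 'a mat \<Rightarrow> bool" where
  "invp n A B = (A \<in> carrier_mat n n \<and> B \<in> carrier_mat n n \<and> A * B = 1\<^sub>m n \<and> B * A = 1\<^sub>m n)"

lemma invp_mult: assumes "invp n A B" "invp n C D" shows "invp n (A*C) (D*B)"
proof -
  have c: "A \<in> carrier_mat n n" "B \<in> carrier_mat n n" "C \<in> carrier_mat n n" "D \<in> carrier_mat n n"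
    and e: "A*B = 1\<^sub>m n" "B*A = 1\<^sub>m n" "C*D = 1\<^sub>m n" "D*C = 1\<^sub>m n" using assms by (auto simp: invp_def)
  have "A * C * (D * B) = A * (C * D) * B" using c by (simp add: assoc_mult_mat[of _ n n _ n _ n])
  also have "\<dots> = 1\<^sub>m n" using c e by simp
  moreover have "D * B * (A * C) = D * (B * A) * C" using c by (simp add: assoc_mult_mat[of _ n n _ n _ n])
  moreover have "\<dots> = 1\<^sub>m n" using c e by simp
  ultimately show ?thesis using c by (auto simp: invp_def)
qed

lemma invp_transpose: assumes "invp n A B" shows "invp n (transpose_mat A) (transpose_mat B)"
proof -
  have c: "A \<in> carrier_mat n n" "B \<in> carrier_mat n n"
    and e: "A*B = 1\<^sub>m n" "B*A = 1\<^sub>m n" using assms by (auto simp: invp_def)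
  have "transpose_mat A * transpose_mat B = transpose_mat (B * A)" using c by (simp add: transpose_mult)
  moreover have "transpose_mat B * transpose_mat A = transpose_mat (A * B)" using c by (simp add: transpose_mult)
  ultimately show ?thesis using c e by (auto simp: invp_def)
qed

lemma invp_bdiag: assumes "invp a A B" "invp b C D" shows "invp (a+b) (bdiag A C) (bdiag B D)"
  using assms unfolding invp_def by (auto simp: bdiag_mult bdiag_one)

lemma invp_one: "invp n (1\<^sub>m n) (1\<^sub>m n)" by (auto simp: invp_def)

lemma invp_invertible: "invp n A B \<Longrightarrow> invertible_mat A"
  unfolding invp_def invertible_mat_def inverts_mat_def by auto

lemma GL_invp: assumes "G \<in> GL n" shows "\<exists>B. invp n G B"
proof -
  from assms have G: "G \<in> carrier_mat n n" and "invertible_mat G" by (auto simp: GL_def)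
  then obtain B where e1: "G * B = 1\<^sub>m n" and e2: "B * G = 1\<^sub>m (dim_row B)"
    unfolding invertible_mat_def inverts_mat_def by auto
  have "dim_col (G * B) = dim_col (1\<^sub>m n :: 'a mat)" using e1 by simp
  then have c: "dim_col B = n" by simp
  have "dim_col (B * G) = dim_col (1\<^sub>m (dim_row B) :: 'a mat)" using e2 by simp
  then have r: "dim_row B = n" using G by simp
  have Bc: "B \<in> carrier_mat n n" using c r unfolding carrier_mat_def by simp
  have e2': "B * G = 1\<^sub>m n" using e2 r by simp
  show ?thesis unfolding invp_def using G Bc e1 e2' by blast
qed

lemma invp_GL: "invp n A B \<Longrightarrow> A \<in> GL n"
  unfolding GL_def using invp_invertible by (auto simp: invp_def)

lemma psi2_dims[simp]: "dim_row psi2 = 2" "dim_col psi2 = 2" by (auto simp: psi2_def)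
lemma psi_dims[simp]: "dim_row (psi r) = 2*r" "dim_col (psi r) = 2*r" using psi_carrier[of r] unfolding carrier_mat_def by blast+
lemma psi2_ent: "psi2 $$ (0,0) = 0" "psi2 $$ (0,Suc 0) = 1" "psi2 $$ (Suc 0,0) = -1" "psi2 $$ (Suc 0,Suc 0) = 0"
  by (auto simp: psi2_def)
lemma sum_2: "(\<Sum>k\<in>{0..<2::nat}. f k) = f 0 + f 1"
  by (simp add: numeral_2_eq_2)
lemma psi2_sq: "(psi2::'a::comm_ring_1 mat) * psi2 = - 1\<^sub>m 2"
proof (rule eq_matI)
  fix i j assume "i < dim_row (- 1\<^sub>m 2 :: 'a mat)" "j < dim_col (- 1\<^sub>m 2 :: 'a mat)"
  then have ij: "i < 2" "j < 2" by auto
  have e: "((psi2::'a mat) * psi2) $$ (i,j) = (psi2::'a mat) $$ (i,0) * (psi2::'a mat) $$ (0,j) + (psi2::'a mat) $$ (i,Suc 0) * (psi2::'a mat) $$ (Suc 0,j)"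
    using ij by (simp add: scalar_prod_def sum_2)
  have r: "(- 1\<^sub>m 2 :: 'a mat) $$ (i,j) = (if i = j then -1 else 0)" using ij by simp
  have "i = 0 \<or> i = Suc 0" "j = 0 \<or> j = Suc 0" using ij by auto
  then consider "i = 0" "j = 0" | "i = 0" "j = Suc 0" | "i = Suc 0" "j = 0" | "i = Suc 0" "j = Suc 0" by blast
  then show "((psi2::'a mat) * psi2) $$ (i,j) = (- 1\<^sub>m 2 :: 'a mat) $$ (i,j)"
    unfolding e r by cases (simp_all add: psi2_ent)
qed auto
lemma psi_diag: "i < 2*r \<Longrightarrow> (psi r :: 'a::comm_ring_1 mat) $$ (i,i) = 0"
proof (induction r arbitrary: i)
  case 0 then show ?case by simp
next
  case (Suc r)
  have A: "(psi (Suc r)::'a mat) $$ (i,i) = (if i < 2 then (psi2::'a mat) $$ (i,i) else psi r $$ (i-2,i-2))"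
    using Suc.prems psi_carrier[of r] by (simp add: bdiag_def)
  show ?case
  proof (cases "i < 2")
    case True
    then have "i = 0 \<or> i = Suc 0" by auto
    then have "(psi2 :: 'a mat) $$ (i,i) = 0" using psi2_ent by auto
    have "(psi (Suc r)::'a mat) $$ (i,i) = (psi2::'a mat) $$ (i,i)" by (simp only: A True if_True)
    then show ?thesis using \<open>(psi2 :: 'a mat) $$ (i,i) = 0\<close> by simp
  next
    case False
    from Suc.prems have "i < 2*r + 2" by simp
    with False have "i - 2 < 2*r" by linarith
    then have "(psi r :: 'a mat) $$ (i-2,i-2) = 0" using Suc.IH by blast
    moreover have "(psi (Suc r)::'a mat) $$ (i,i) = psi r $$ (i-2,i-2)" by (simp only: A False if_False)
    ultimately show ?thesis by simp
  qed
qed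

lemma psi_sq: "(psi r::'a::comm_ring_1 mat) * psi r = - 1\<^sub>m (2*r)"
proof (induction r)
  case 0 then show ?case by (rule eq_matI) auto
next
  case (Suc r)
  have "(psi (Suc r)::'a mat) * psi (Suc r) = bdiag ((psi2::'a mat) * psi2) (psi r * psi r)"
    by (simp add: bdiag_mult[of psi2 2 psi2 "psi r" "2*r"])
  also have "\<dots> = bdiag (- 1\<^sub>m 2) (- 1\<^sub>m (2*r))" by (simp only: Suc.IH psi2_sq)
  also have "\<dots> = - 1\<^sub>m (2 * Suc r)" by (simp add: bdiag_uminus[of _ 2 _ "2*r"] bdiag_one)
  finally show ?case .
qed

lemma psi_invp: "invp (2*r) (psi r) (- psi r :: 'a::comm_ring_1 mat)"
  unfolding invp_def using psi_sq[of r, where 'a='a] by auto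

lemma psi_transpose: "transpose_mat (psi r) = - (psi r :: 'a::comm_ring_1 mat)"
proof (induction r)
  case 0 then show ?case by (rule eq_matI) auto
next
  case (Suc r)
  have "transpose_mat (psi2::'a mat) = - psi2"
  proof (rule eq_matI)
    fix i j assume "i < dim_row (- psi2 :: 'a mat)" "j < dim_col (- psi2 :: 'a mat)"
    then have "i = 0 \<or> i = Suc 0" "j = 0 \<or> j = Suc 0" by auto
    then consider "i = 0" "j = 0" | "i = 0" "j = Suc 0" | "i = Suc 0" "j = 0" | "i = Suc 0" "j = Suc 0" by blast
    then show "transpose_mat (psi2::'a mat) $$ (i,j) = (- psi2 :: 'a mat) $$ (i,j)"
      by cases (simp_all add: psi2_ent)
  qed auto
  then show ?case using Suc by (simp add: bdiag_transpose[of psi2 2 _ "2*r"] bdiag_uminus[of _ 2 _ "2*r"])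
qed




lemma alt_congr:
  fixes A :: "'a::comm_ring_1 mat"
  assumes A: "A \<in> carrier_mat n n" "alternating A" and M: "M \<in> carrier_mat n k"
  shows "alternating (transpose_mat M * A * M)"
proof -
  have At: "transpose_mat A = - A" and Ad: "\<And>i. i < n \<Longrightarrow> A $$ (i,i) = 0"
    using A unfolding alternating_def by auto
  have Aij: "A $$ (i,j) = - A $$ (j,i)" if "i < n" "j < n" for i j
  proof -
    have "transpose_mat A $$ (j,i) = (- A) $$ (j,i)" using At by simp
    then show ?thesis using that A by simp
  qed
  define B where "B = mat n n (\<lambda>(i,j). if i < j then A $$ (i,j) else 0)"
  have B: "B \<in> carrier_mat n n" unfolding B_def by auto
  have AB: "A = B - transpose_mat B"
  proof (rule eq_matI)
    fix i j assume ij: "i < dim_row (B - transpose_mat B)" "j < dim_col (B - transpose_mat B)"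
    then have ij': "i < n" "j < n" using B by auto
    show "A $$ (i,j) = (B - transpose_mat B) $$ (i,j)"
      using ij' Aij[OF ij'] Ad[OF ij'(1)] by (auto simp: B_def)
  qed (use A B in auto)
  define C where "C = transpose_mat M * B * M"
  have Mt: "transpose_mat M \<in> carrier_mat k n" using M by auto
  have C: "C \<in> carrier_mat k k" unfolding C_def using M B by auto
  have tr3: "transpose_mat (transpose_mat M * D * M) = transpose_mat M * transpose_mat D * M" if D: "D \<in> carrier_mat n n" for D
  proof -
    have "transpose_mat (transpose_mat M * D * M) = transpose_mat M * transpose_mat (transpose_mat M * D)"
      using M Mt D by (subst transpose_mult[of _ k n _ k]) auto
    also have "transpose_mat (transpose_mat M * D) = transpose_mat D * M"
      using M Mt D by (subst transpose_mult[of _ k n _ n]) auto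
    also have "transpose_mat M * (transpose_mat D * M) = transpose_mat M * transpose_mat D * M"
      using M Mt D by (subst assoc_mult_mat[of _ k n _ n _ k]) auto
    finally show ?thesis .
  qed
  have Ct: "transpose_mat C = transpose_mat M * transpose_mat B * M"
    unfolding C_def by (rule tr3[OF B])
  have eq: "transpose_mat M * A * M = C - transpose_mat C"
  proof -
    have "transpose_mat M * A * M = transpose_mat M * (B - transpose_mat B) * M" using AB by simp
    also have "\<dots> = (transpose_mat M * B - transpose_mat M * transpose_mat B) * M"
      using Mt B by (subst mult_minus_distrib_mat[of _ k n]) auto
    also have "\<dots> = transpose_mat M * B * M - transpose_mat M * transpose_mat B * M"
      using Mt B M by (subst minus_mult_distrib_mat[of _ k n]) auto
    finally have "transpose_mat M * A * M = C - transpose_mat M * transpose_mat B * M" unfolding C_def .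
    then show ?thesis unfolding Ct .
  qed
  have tr: "transpose_mat (transpose_mat M * A * M) = - (transpose_mat M * A * M)"
  proof -
    have "transpose_mat (transpose_mat M * A * M) = transpose_mat M * transpose_mat A * M"
      by (rule tr3[OF A(1)])
    also have "\<dots> = - (transpose_mat M * A * M)" unfolding At using Mt A M by simp
    finally show ?thesis .
  qed
  show ?thesis unfolding alternating_def
  proof (intro conjI allI impI)
    show "square_mat (transpose_mat M * A * M)" using M by simp
    show "transpose_mat (transpose_mat M * A * M) = - (transpose_mat M * A * M)" by (rule tr)
    fix i assume "i < dim_row (transpose_mat M * A * M)"
    then have i: "i < k" using M by simp
    show "(transpose_mat M * A * M) $$ (i,i) = 0" unfolding eq using C i by simp
  qed
qed

lemma psi_alt: "alternating (psi r :: 'a::comm_ring_1 mat)"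
  unfolding alternating_def using psi_transpose psi_diag by auto

definition eta' :: "'a::comm_ring_1 mat \<Rightarrow> 'a mat" where
  "eta' A = transpose_mat A * psi (dim_row A div 2) * A"

definition hat :: "'a::comm_ring_1 mat \<Rightarrow> 'a mat" where
  "hat G = bdiag G (1\<^sub>m (dim_row G mod 2))"

lemma eta'_Sp: assumes "invp (2*r) A B" shows "eta' A \<in> Sp' r"
proof -
  have A: "A \<in> carrier_mat (2*r) (2*r)" using assms by (auto simp: invp_def)
  then have e: "eta' A = transpose_mat A * psi r * A" unfolding eta'_def by simp
  have "alternating (eta' A)" unfolding e by (rule alt_congr[OF psi_carrier psi_alt A])
  moreover have "invp (2*r) (eta' A) (B * (- psi r * transpose_mat B))"
    unfolding e by (intro invp_mult invp_transpose assms psi_invp)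
  ultimately show ?thesis unfolding Sp'_def e using A invp_invertible by auto
qed



lemma bdiag_psi0: "Y \<in> carrier_mat a a \<Longrightarrow> bdiag Y (psi 0) = Y"
  by (rule eq_matI) (auto simp: bdiag_def)

lemma bdiag_zero0r: "Y \<in> carrier_mat a a \<Longrightarrow> bdiag Y (0\<^sub>m 0 0) = Y"
  by (rule eq_matI) (auto simp: bdiag_def)

lemma S'_carrier: "X \<in> S' \<Longrightarrow> \<exists>a. X \<in> carrier_mat (2*a) (2*a) \<and> X \<in> Sp' a"
  unfolding S'_def Sp'_def by auto

lemma bdiag_psi_split: "X \<in> carrier_mat a a \<Longrightarrow> bdiag X (psi (c+s)) = bdiag (bdiag X (psi c)) (psi s)"
  by (simp add: psi_add bdiag_assoc[of X a _ "2*c" _ "2*s"])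

lemma pad_eq:
  fixes X :: "'a::comm_ring_1 mat"
  assumes c: "X \<in> carrier_mat N N" "Y \<in> carrier_mat N N" "E \<in> carrier_mat N N" and eq: "X = transpose_mat E * Y * E"
  shows "bdiag X (psi s) = transpose_mat (bdiag E (1\<^sub>m (2*s))) * bdiag Y (psi s) * bdiag E (1\<^sub>m (2*s))"
proof -
  have "transpose_mat (bdiag E (1\<^sub>m (2*s))) = bdiag (transpose_mat E) (1\<^sub>m (2*s))"
    using c by (simp add: bdiag_transpose[of E N _ "2*s"])
  moreover have "bdiag (transpose_mat E) (1\<^sub>m (2*s)) * bdiag Y (psi s) = bdiag (transpose_mat E * Y) (psi s)"
    using c by (simp add: bdiag_mult[of _ N _ _ "2*s"])
  moreover have "bdiag (transpose_mat E * Y) (psi s) * bdiag E (1\<^sub>m (2*s)) = bdiag (transpose_mat E * Y * E) (psi s)"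
    using c by (simp add: bdiag_mult[of _ N _ _ "2*s"])
  ultimately show ?thesis using eq by simp
qed

definition Wd :: "'a::comm_ring_1 mat \<Rightarrow> 'a mat \<Rightarrow> nat \<Rightarrow> nat \<Rightarrow> 'a mat \<Rightarrow> bool" where
  "Wd X Y c d E = (dim_row X + 2*c = dim_row Y + 2*d \<and> E \<in> Elem (dim_row X + 2*c) \<and>
      bdiag X (psi c) = transpose_mat E * bdiag Y (psi d) * E)"

definition Wp :: "'a::comm_ring_1 mat \<Rightarrow> 'a mat \<Rightarrow> bool" where
  "Wp X Y = (X \<in> S' \<and> Y \<in> S' \<and> (\<exists>c d E. Wd X Y c d E))"

lemma Wd_pad: assumes X: "X \<in> carrier_mat a a" and Y: "Y \<in> carrier_mat b b" and W: "Wd X Y c d E"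
  shows "Wd X Y (c+s) (d+s) (bdiag E (1\<^sub>m (2*s)))"
proof -
  have dims: "a + 2*c = b + 2*d" and E: "E \<in> Elem (a + 2*c)" and eq: "bdiag X (psi c) = transpose_mat E * bdiag Y (psi d) * E"
    using W X Y unfolding Wd_def by auto
  have Ec: "E \<in> carrier_mat (a+2*c) (a+2*c)" using Elem_carrier[OF E] .
  have c1: "bdiag X (psi c) \<in> carrier_mat (a+2*c) (a+2*c)" using X by simp
  have c2: "bdiag Y (psi d) \<in> carrier_mat (a+2*c) (a+2*c)" using Y dims by (metis bdiag_carrier psi_carrier)
  have "bdiag X (psi (c+s)) = bdiag (bdiag X (psi c)) (psi s)" using bdiag_psi_split[OF X] .
  also have "\<dots> = transpose_mat (bdiag E (1\<^sub>m (2*s))) * bdiag (bdiag Y (psi d)) (psi s) * bdiag E (1\<^sub>m (2*s))"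
    by (rule pad_eq[OF c1 c2 Ec eq])
  also have "bdiag (bdiag Y (psi d)) (psi s) = bdiag Y (psi (d+s))" using bdiag_psi_split[OF Y] by simp
  finally have eq': "bdiag X (psi (c+s)) = transpose_mat (bdiag E (1\<^sub>m (2*s))) * bdiag Y (psi (d+s)) * bdiag E (1\<^sub>m (2*s))" .
  have "bdiag E (1\<^sub>m (2*s)) \<in> Elem (a + 2*c + 2*s)" using Elem_pad[OF E] .
  then show ?thesis unfolding Wd_def using X Y dims eq' by (simp add: algebra_simps)
qed

lemma Wd_trans:
  assumes X: "X \<in> carrier_mat a a" and Y: "Y \<in> carrier_mat b b" and Z: "Z \<in> carrier_mat e e"
    and W1: "Wd X Y c d E" and W2: "Wd Y Z c' d' F"
  shows "\<exists>c'' d'' E''. Wd X Z c'' d'' E''"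
proof -
  have W1': "Wd X Y (c+c') (d+c') (bdiag E (1\<^sub>m (2*c')))" by (rule Wd_pad[OF X Y W1])
  have W2': "Wd Y Z (c'+d) (d'+d) (bdiag F (1\<^sub>m (2*d)))" by (rule Wd_pad[OF Y Z W2])
  define E1 where "E1 = bdiag E (1\<^sub>m (2*c'))"
  define F1 where "F1 = bdiag F (1\<^sub>m (2*d))"
  have d1: "a + 2*(c+c') = b + 2*(d+c')" and E1: "E1 \<in> Elem (a + 2*(c+c'))"
    and eq1: "bdiag X (psi (c+c')) = transpose_mat E1 * bdiag Y (psi (d+c')) * E1"
    using W1' X Y unfolding Wd_def E1_def by auto
  have d2: "b + 2*(c'+d) = e + 2*(d'+d)" and F1: "F1 \<in> Elem (b + 2*(c'+d))"
    and eq2: "bdiag Y (psi (c'+d)) = transpose_mat F1 * bdiag Z (psi (d'+d)) * F1"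
    using W2' Y Z unfolding Wd_def F1_def by auto
  define N where "N = a + 2*(c+c')"
  have NN: "b + 2*(c'+d) = N" "b + 2*(d+c') = N" "e + 2*(d'+d) = N" using d1 d2 unfolding N_def by auto
  have E1c: "E1 \<in> carrier_mat N N" using Elem_carrier[OF E1] unfolding N_def .
  have F1c: "F1 \<in> carrier_mat N N" using Elem_carrier[OF F1] NN by simp
  have Zc: "bdiag Z (psi (d'+d)) \<in> carrier_mat N N" using Z NN by (metis bdiag_carrier psi_carrier)
  have "bdiag X (psi (c+c')) = transpose_mat E1 * (transpose_mat F1 * bdiag Z (psi (d'+d)) * F1) * E1"
    using eq1 eq2 by (simp add: add.commute)
  also have "\<dots> = transpose_mat (F1 * E1) * bdiag Z (psi (d'+d)) * (F1 * E1)"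
    using E1c F1c Zc by (simp add: transpose_mult[of _ N N _ N] assoc_mult_mat[of _ N N _ N _ N])
  finally have eq: "bdiag X (psi (c+c')) = transpose_mat (F1 * E1) * bdiag Z (psi (d'+d)) * (F1 * E1)" .
  have "F1 \<in> Elem N" using F1 NN(1) by simp
  then have "F1 * E1 \<in> Elem N" using Elem_mult[OF E1[folded N_def]] by blast
  then have "Wd X Z (c+c') (d'+d) (F1 * E1)" unfolding Wd_def using X Z NN eq unfolding N_def by simp
  then show ?thesis by blast
qed

lemma Wp_trans: assumes "Wp X Y" "Wp Y Z" shows "Wp X Z"
proof -
  from assms obtain a b e where X: "X \<in> carrier_mat (2*a) (2*a)" and Y: "Y \<in> carrier_mat (2*b) (2*b)"
    and Z: "Z \<in> carrier_mat (2*e) (2*e)" unfolding Wp_def by (metis S'_carrier)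
  from assms obtain c d E c' d' F where "Wd X Y c d E" "Wd Y Z c' d' F" unfolding Wp_def by blast
  then show ?thesis using Wd_trans[OF X Y Z] assms unfolding Wp_def by blast
qed

lemma Wp_W: assumes "Wp X Y" shows "W_equiv X Y"
proof -
  from assms obtain a b where Xa: "X \<in> Sp' a" and Yb: "Y \<in> Sp' b" unfolding Wp_def S'_def by auto
  then have X: "X \<in> carrier_mat (2*a) (2*a)" and Y: "Y \<in> carrier_mat (2*b) (2*b)" unfolding Sp'_def by auto
  from assms obtain c d E where W: "Wd X Y c d E" unfolding Wp_def by auto
  define s where "s = a + c"
  have W': "Wd X Y (c+s) (d+s) (bdiag E (1\<^sub>m (2*s)))" by (rule Wd_pad[OF X Y W])
  have ab: "a + c = b + d" using W X Y unfolding Wd_def by simp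
  have e1: "c + s = b + (c+d)" "d + s = a + (c+d)" using ab unfolding s_def by auto
  have "bdiag E (1\<^sub>m (2*s)) \<in> Elem (2*(b+a+(c+d)))" and
    "bdiag X (psi (b+(c+d))) = transpose_mat (bdiag E (1\<^sub>m (2*s))) * bdiag Y (psi (a+(c+d))) * bdiag E (1\<^sub>m (2*s))"
    using W' X e1 ab unfolding Wd_def by (auto simp: algebra_simps)
  then show ?thesis unfolding W_equiv_def using Xa Yb by blast
qed

lemma Wp_pad_right: assumes X: "X \<in> S'" and XS: "bdiag X (psi c) \<in> S'" shows "Wp X (bdiag X (psi c))"
proof -
  obtain a where Xa: "X \<in> carrier_mat (2*a) (2*a)" using S'_carrier[OF X] by auto
  have "Wd X (bdiag X (psi c)) c 0 (1\<^sub>m (2*a + 2*c))"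
    unfolding Wd_def using Xa bdiag_zero0r[OF bdiag_carrier[OF Xa psi_carrier[of c]]] by (auto simp: Elem_one)
  then show ?thesis unfolding Wp_def using X XS by blast
qed

lemma Wp_pad_left: assumes X: "X \<in> S'" and XS: "bdiag X (psi c) \<in> S'" shows "Wp (bdiag X (psi c)) X"
proof -
  obtain a where Xa: "X \<in> carrier_mat (2*a) (2*a)" using S'_carrier[OF X] by auto
  have "Wd (bdiag X (psi c)) X 0 c (1\<^sub>m (2*a + 2*c))"
    unfolding Wd_def using Xa bdiag_zero0r[OF bdiag_carrier[OF Xa psi_carrier[of c]]] by (auto simp: Elem_one)
  then show ?thesis unfolding Wp_def using X XS by blast
qed



lemma hat_dim: "m + m mod 2 = 2 * ((m+1) div 2)" for m :: nat by presburger

lemma hat_carrier: "G \<in> carrier_mat m m \<Longrightarrow> hat G \<in> carrier_mat (2 * ((m+1) div 2)) (2 * ((m+1) div 2))"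
  unfolding hat_def using hat_dim[of m] by (metis bdiag_carrier carrier_matD(1) one_carrier_mat)

lemma hat_invp: assumes "invp m G Gi" shows "invp (2 * ((m+1) div 2)) (hat G) (hat Gi)"
proof -
  have "dim_row G = m" "dim_row Gi = m" using assms by (auto simp: invp_def)
  then show ?thesis unfolding hat_def using invp_bdiag[OF assms invp_one[of "m mod 2"]] hat_dim[of m] by simp
qed

lemma eta_hat: assumes G: "G \<in> carrier_mat m m" shows "eta G = eta' (hat G)"
proof (cases "even m")
  case True
  then have "hat G = G" unfolding hat_def using G by (simp add: bdiag_one0)
  then show ?thesis unfolding eta_def eta'_def using True G by simp
next
  case False
  then have "m mod 2 = 1" by presburger
  moreover have "(m + 1) div 2 = m div 2 + 1" using False by presburger
  ultimately show ?thesis unfolding eta_def eta'_def hat_def using False G by simp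
qed

lemma eta'_mult: assumes A: "A \<in> carrier_mat (2*r) (2*r)" and E: "E \<in> carrier_mat (2*r) (2*r)"
  shows "eta' (A * E) = transpose_mat E * eta' A * E"
proof -
  have d: "dim_row (A * E) div 2 = r" "dim_row A div 2 = r" using A by auto
  have "transpose_mat (A * E) = transpose_mat E * transpose_mat A" using A E by (rule transpose_mult)
  moreover have c: "transpose_mat A \<in> carrier_mat (2*r) (2*r)" "transpose_mat E \<in> carrier_mat (2*r) (2*r)"
    "psi r \<in> carrier_mat (2*r) (2*r)" "psi r * A \<in> carrier_mat (2*r) (2*r)"
    "transpose_mat A * (psi r * A) \<in> carrier_mat (2*r) (2*r)" "A * E \<in> carrier_mat (2*r) (2*r)"
    "transpose_mat A * psi r \<in> carrier_mat (2*r) (2*r)" "transpose_mat A * psi r * A \<in> carrier_mat (2*r) (2*r)"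
    using A E by auto
  ultimately show ?thesis unfolding eta'_def d using A E
    by (simp add: assoc_mult_mat[of _ "2*r" "2*r" _ "2*r" _ "2*r"])
qed

lemma eta'_bdiag: assumes A: "A \<in> carrier_mat (2*a) (2*a)" and B: "B \<in> carrier_mat (2*b) (2*b)"
  shows "eta' (bdiag A B) = bdiag (eta' A) (eta' B)"
proof -
  have d: "dim_row (bdiag A B) div 2 = a + b" "dim_row A div 2 = a" "dim_row B div 2 = b" using A B by auto
  have "eta' (bdiag A B) = bdiag (transpose_mat A) (transpose_mat B) * bdiag (psi a) (psi b) * bdiag A B"
    unfolding eta'_def d psi_add using A B by (simp add: bdiag_transpose)
  also have "\<dots> = bdiag (transpose_mat A * psi a) (transpose_mat B * psi b) * bdiag A B"
    using A B by (subst bdiag_mult[of _ "2*a" _ _ "2*b"]) auto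
  also have "\<dots> = bdiag (transpose_mat A * psi a * A) (transpose_mat B * psi b * B)"
    using A B by (subst bdiag_mult[of _ "2*a" _ _ "2*b"]) auto
  finally show ?thesis unfolding eta'_def d .
qed

lemma eta'_one: "eta' (1\<^sub>m (2*c)) = psi c"
  unfolding eta'_def by simp

lemma par_ex: "\<exists>c. (m::nat) mod 2 + 2*c = s + (m+s) mod 2"
proof -
  obtain a where a: "m = 2*a \<or> m = 2*a+1" by (metis oddE evenE)
  obtain b where b: "s = 2*b \<or> s = 2*b+1" by (metis oddE evenE)
  from a b show ?thesis
  proof (elim disjE)
    assume "m = 2*a" "s = 2*b" then show ?thesis by (intro exI[of _ b]) simp
  next
    assume "m = 2*a" "s = 2*b+1" then show ?thesis by (intro exI[of _ "b+1"]) simp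
  next
    assume "m = 2*a+1" "s = 2*b" then show ?thesis by (intro exI[of _ b]) simp
  next
    assume "m = 2*a+1" "s = 2*b+1" then show ?thesis by (intro exI[of _ b]) simp
  qed
qed

lemma hat_bdiag_one: assumes G: "G \<in> carrier_mat m m"
  shows "\<exists>c. hat (bdiag G (1\<^sub>m s)) = bdiag (hat G) (1\<^sub>m (2*c))"
proof -
  obtain c where ar: "m mod 2 + 2*c = s + (m+s) mod 2" using par_ex by blast
  have "hat (bdiag G (1\<^sub>m s)) = bdiag (bdiag G (1\<^sub>m s)) (1\<^sub>m ((m+s) mod 2))"
    unfolding hat_def using G by simp
  also have "\<dots> = bdiag G (1\<^sub>m (s + (m+s) mod 2))"
    using G by (simp add: bdiag_assoc[of G m _ s _ "(m+s) mod 2"] bdiag_one)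
  also have "\<dots> = bdiag G (bdiag (1\<^sub>m (m mod 2)) (1\<^sub>m (2*c)))" unfolding bdiag_one ar ..
  also have "\<dots> = bdiag (hat G) (1\<^sub>m (2*c))"
    unfolding hat_def using G by (simp add: bdiag_assoc[of G m _ "m mod 2" _ "2*c"])
  finally show ?thesis by blast
qed

lemma eta_stab: assumes G: "G \<in> carrier_mat m m"
  shows "\<exists>c. eta (bdiag G (1\<^sub>m s)) = bdiag (eta G) (psi c)"
proof -
  obtain c where c: "hat (bdiag G (1\<^sub>m s)) = bdiag (hat G) (1\<^sub>m (2*c))" using hat_bdiag_one[OF G] by blast
  have "eta (bdiag G (1\<^sub>m s)) = eta' (hat (bdiag G (1\<^sub>m s)))"
    by (rule eta_hat[of _ "m+s"]) (use G in simp)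
  also have "\<dots> = bdiag (eta' (hat G)) (eta' (1\<^sub>m (2*c)))"
    unfolding c by (rule eta'_bdiag[OF hat_carrier[OF G] one_carrier_mat[of "2*c"]])
  also have "\<dots> = bdiag (eta G) (psi c)" by (simp only: eta_hat[OF G] eta'_one)
  finally show ?thesis by blast
qed

lemma part1: assumes "G \<in> GL m" shows "eta G \<in> S'"
proof -
  obtain Gi where i: "invp m G Gi" using GL_invp[OF assms] by blast
  have G: "G \<in> carrier_mat m m" using i by (auto simp: invp_def)
  have "eta' (hat G) \<in> Sp' ((m+1) div 2)" by (rule eta'_Sp[OF hat_invp[OF i]])
  then show ?thesis unfolding eta_hat[OF G] S'_def by blast
qed

lemma GL_carrier: "G \<in> GL m \<Longrightarrow> G \<in> carrier_mat m m" unfolding GL_def by auto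

lemma GL_stab: assumes "G \<in> GL m" shows "bdiag G (1\<^sub>m s) \<in> GL (m+s)"
proof -
  obtain Gi where i: "invp m G Gi" using GL_invp[OF assms] by blast
  show ?thesis using invp_GL[OF invp_bdiag[OF i invp_one[of s]]] .
qed

lemma Wp_stab: assumes GL: "G \<in> GL m"
  shows "Wp (eta G) (eta (bdiag G (1\<^sub>m s)))" "Wp (eta (bdiag G (1\<^sub>m s))) (eta G)"
proof -
  obtain c where c: "eta (bdiag G (1\<^sub>m s)) = bdiag (eta G) (psi c)" using eta_stab[OF GL_carrier[OF GL]] by blast
  have S1: "eta G \<in> S'" by (rule part1[OF GL])
  have S2: "bdiag (eta G) (psi c) \<in> S'" unfolding c[symmetric] by (rule part1[OF GL_stab[OF GL]])
  show "Wp (eta G) (eta (bdiag G (1\<^sub>m s)))" unfolding c by (rule Wp_pad_right[OF S1 S2])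
  show "Wp (eta (bdiag G (1\<^sub>m s))) (eta G)" unfolding c by (rule Wp_pad_left[OF S1 S2])
qed



lemma eta'_carrier: assumes A: "A \<in> carrier_mat (2*r) (2*r)" shows "eta' A \<in> carrier_mat (2*r) (2*r)"
proof -
  have "dim_row A div 2 = r" using A by simp
  then have "eta' A = transpose_mat A * psi r * A" unfolding eta'_def by simp
  moreover have "transpose_mat A * psi r \<in> carrier_mat (2*r) (2*r)" using A by (intro mult_carrier_mat) auto
  ultimately show ?thesis using A by (metis mult_carrier_mat)
qed

lemma Wp_Elem: assumes XS: "eta' A \<in> S'" and YS: "eta' (A * E) \<in> S'"
  and A: "A \<in> carrier_mat (2*r) (2*r)" and E: "E \<in> Elem (2*r)"
  shows "Wp (eta' (A * E)) (eta' A)"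
proof -
  have Ec: "E \<in> carrier_mat (2*r) (2*r)" using Elem_carrier[OF E] .
  have e: "eta' (A * E) = transpose_mat E * eta' A * E" by (rule eta'_mult[OF A Ec])
  have ca: "eta' A \<in> carrier_mat (2*r) (2*r)" using eta'_carrier[OF A] .
  have ce: "eta' (A * E) \<in> carrier_mat (2*r) (2*r)" using A Ec by (intro eta'_carrier) auto
  have "Wd (eta' (A * E)) (eta' A) 0 0 E"
    unfolding Wd_def using ca ce e E Ec bdiag_zero0r[OF ca] bdiag_zero0r[OF ce] by simp
  then show ?thesis unfolding Wp_def using XS YS by blast
qed

lemma part3: assumes G: "G \<in> GL m" and H: "H \<in> GL n" and K: "K1_equiv G H"
  shows "W_equiv (eta G) (eta H)"
proof -
  obtain k E where k: "m \<le> k" "n \<le> k" and E: "E \<in> Elem k" and eq: "stab G k = stab H k * E"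
    using K G H unfolding K1_equiv_def GL_def by auto
  have Gc: "G \<in> carrier_mat m m" and Hc: "H \<in> carrier_mat n n" using G H by (auto simp: GL_def)
  define SG where "SG = bdiag G (1\<^sub>m (k - m))"
  define SH where "SH = bdiag H (1\<^sub>m (k - n))"
  have SGe: "stab G k = SG" unfolding stab_def SG_def using Gc by simp
  have SHe: "stab H k = SH" unfolding stab_def SH_def using Hc by simp
  have SGGL: "SG \<in> GL k" unfolding SG_def using GL_stab[OF G, of "k-m"] k by simp
  have SHGL: "SH \<in> GL k" unfolding SH_def using GL_stab[OF H, of "k-n"] k by simp
  have SHc: "SH \<in> carrier_mat k k" using SHGL by (rule GL_carrier)
  have Ec: "E \<in> carrier_mat k k" using Elem_carrier[OF E] .
  have w1: "Wp (eta G) (eta SG)" unfolding SG_def by (rule Wp_stab(1)[OF G])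
  have w3: "Wp (eta SH) (eta H)" unfolding SH_def by (rule Wp_stab(2)[OF H])
  have SGSH: "SG = SH * E" using eq SGe SHe by simp
  define E' where "E' = bdiag E (1\<^sub>m (k mod 2))"
  have E': "E' \<in> Elem (2 * ((k+1) div 2))" unfolding E'_def using Elem_pad[OF E, of "k mod 2"] hat_dim[of k] by simp
  have hatSG: "hat SG = hat SH * E'"
  proof -
    have "hat SG = bdiag (SH * E) (1\<^sub>m (k mod 2))" unfolding hat_def SGSH using SHc Ec by simp
    also have "\<dots> = bdiag SH (1\<^sub>m (k mod 2)) * E'" unfolding E'_def
      using SHc Ec by (simp add: bdiag_mult[of SH k E _ "k mod 2"])
    also have "\<dots> = hat SH * E'" unfolding hat_def using SHc by simp
    finally show ?thesis .
  qed
  have w2: "Wp (eta SG) (eta SH)"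
  proof -
    have "eta SG = eta' (hat SH * E')" using eta_hat[OF GL_carrier[OF SGGL]] hatSG by simp
    moreover have "eta SH = eta' (hat SH)" using eta_hat[OF SHc] .
    moreover have "Wp (eta' (hat SH * E')) (eta' (hat SH))"
      by (rule Wp_Elem[OF _ _ hat_carrier[OF SHc] E'])
        (use part1[OF SHGL] part1[OF SGGL] eta_hat[OF SHc] eta_hat[OF GL_carrier[OF SGGL]] hatSG in auto)
    ultimately show ?thesis by simp
  qed
  show ?thesis using Wp_W[OF Wp_trans[OF Wp_trans[OF w1 w2] w3]] .
qed

lemma part4: assumes G: "G \<in> GL m" and H: "H \<in> GL m"
  shows "W_equiv (eta (G * H)) (bdiag (eta G) (eta H))"
proof -
  obtain Gi where gi: "invp m G Gi" using GL_invp[OF G] by blast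
  obtain Hi where hi: "invp m H Hi" using GL_invp[OF H] by blast
  have Gc: "G \<in> carrier_mat m m" and Hc: "H \<in> carrier_mat m m" using gi hi by (auto simp: invp_def)
  define r where "r = (m+1) div 2"
  define N where "N = 2*r"
  have hg: "invp N (hat G) (hat Gi)" unfolding N_def r_def by (rule hat_invp[OF gi])
  have hh: "invp N (hat H) (hat Hi)" unfolding N_def r_def by (rule hat_invp[OF hi])
  have Ghc: "hat G \<in> carrier_mat N N" and Hhc: "hat H \<in> carrier_mat N N" and Hic: "hat Hi \<in> carrier_mat N N"
    and HHi: "hat H * hat Hi = 1\<^sub>m N" and HiH: "hat Hi * hat H = 1\<^sub>m N"
    using hg hh by (auto simp: invp_def)
  have GHGL: "G * H \<in> GL m" using invp_GL[OF invp_mult[OF gi hi]] .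
  have hatGH: "hat (G * H) = hat G * hat H"
    unfolding hat_def using Gc Hc by (simp add: bdiag_mult[of G m H _ "m mod 2"])
  have e1: "eta (G * H) = eta' (hat G * hat H)" using eta_hat[OF GL_carrier[OF GHGL]] hatGH by simp
  have e2: "bdiag (eta G) (eta H) = eta' (bdiag (hat G) (hat H))"
    using eta_hat[OF Gc] eta_hat[OF Hc] eta'_bdiag[of "hat G" r "hat H" r] Ghc Hhc unfolding N_def by simp
  define W where "W = bdiag (hat H) (hat Hi)"
  have WE: "W \<in> Elem (N + N)" unfolding W_def by (rule whitehead[OF Hhc Hic HHi HiH])
  have Wc: "W \<in> carrier_mat (2*(r+r)) (2*(r+r))" using Elem_carrier[OF WE] unfolding N_def by (simp add: algebra_simps)
  have BGH: "bdiag (hat G) (hat H) \<in> carrier_mat (2*(r+r)) (2*(r+r))" using Ghc Hhc unfolding N_def by (metis bdiag_carrier add_mult_distrib2)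
  have GHc: "hat G * hat H \<in> carrier_mat (2*r) (2*r)" using Ghc Hhc unfolding N_def by simp
  have eqn: "bdiag (eta' (hat G * hat H)) (psi r) = transpose_mat W * eta' (bdiag (hat G) (hat H)) * W"
  proof -
    have "bdiag (eta' (hat G * hat H)) (psi r) = bdiag (eta' (hat G * hat H)) (eta' (1\<^sub>m (2*r)))"
      by (simp only: eta'_one)
    also have "\<dots> = eta' (bdiag (hat G * hat H) (1\<^sub>m (2*r)))"
      by (rule eta'_bdiag[OF GHc one_carrier_mat, symmetric])
    also have "bdiag (hat G * hat H) (1\<^sub>m (2*r)) = bdiag (hat G) (hat H) * W"
      unfolding W_def using Ghc Hhc Hic HHi unfolding N_def by (simp add: bdiag_mult[of _ "2*r" _ _ "2*r"])
    also have "eta' (bdiag (hat G) (hat H) * W) = transpose_mat W * eta' (bdiag (hat G) (hat H)) * W"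
      by (rule eta'_mult[OF BGH Wc])
    finally show ?thesis .
  qed
  have S1: "eta (G * H) \<in> S'" by (rule part1[OF GHGL])
  have S2: "eta' (bdiag (hat G) (hat H)) \<in> S'"
    using eta'_Sp[of "r+r" _ "bdiag (hat Gi) (hat Hi)"] invp_bdiag[OF hg hh] unfolding S'_def N_def
    by (auto simp: algebra_simps)
  have ce: "eta' (bdiag (hat G) (hat H)) \<in> carrier_mat (2*(r+r)) (2*(r+r))" using eta'_carrier[OF BGH] .
  have ce1: "eta' (hat G * hat H) \<in> carrier_mat (2*r) (2*r)" using eta'_carrier[OF GHc] .
  have "Wd (eta' (hat G * hat H)) (eta' (bdiag (hat G) (hat H))) r 0 W"
    unfolding Wd_def using ce ce1 eqn WE bdiag_zero0r[OF ce] unfolding N_def by (simp add: algebra_simps)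
  then have "Wp (eta (G * H)) (bdiag (eta G) (eta H))" unfolding Wp_def e1 e2 using S1 S2 e1 by auto
  then show ?thesis by (rule Wp_W)
qed

theorem lemma2p4:
  fixes R :: "'a::comm_ring_1 itself"
  assumes two_unit: "\<exists>u::'a. 2 * u = 1"
  shows "(\<forall>m (G::'a mat). G \<in> GL m \<longrightarrow> eta G \<in> S')
       \<and> (\<forall>m (G::'a mat). G \<in> GL m \<longrightarrow> W_equiv (eta (bdiag G (1\<^sub>m 1))) (eta G))
       \<and> (\<forall>m n (G::'a mat) H. G \<in> GL m \<longrightarrow> H \<in> GL n \<longrightarrow> K1_equiv G H \<longrightarrow>
             W_equiv (eta G) (eta H))
       \<and> (\<forall>m (G::'a mat) H. G \<in> GL m \<longrightarrow> H \<in> GL m \<longrightarrow>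
             W_equiv (eta (G * H)) (bdiag (eta G) (eta H)))"
  using part1 Wp_W[OF Wp_stab(2)] part3 part4 by blast


end
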